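(* There exist parameter classes $\Phi,\Psi$ and ground truth $\phi^*\in\Phi,\psi^*\in\Psi$ (with $x,y,z$ taking values in the positive integers and no side information) such that for every constant $c>0$ there exist $m,n\ge c$ for which, with probability at least $\frac12(1-e^{-1})e^{-1}$, the output $(\hat\phi,\hat\psi)$ of the two-phase MLE algorithm satisfies $$d_{\mathrm{TV}}\big(\mathbb P_{\hat\phi,\hat\psi}(x,y),\mathbb P_{\phi^*,\psi^*}(x,y)\big)\ge\frac18.$$
   Context: Setup: $\Phi$ indexes joint distributions $\mathbb P_\phi(x,z)$ and $\Psi$ indexes conditional distributions $\mathbb P_\psi(y\mid z)$; $\mathbb P_{\phi,\psi}(x,y)=\sum_z\mathbb P_\phi(x,z)\mathbb P_\psi(y\mid z)$. Data: $m$ i.i.d. unlabeled $x_i\sim\mathbb P_{\phi^*}(x)$ and independent $n$ i.i.d. labeled $(x_j,y_j)\sim\mathbb P_{\phi^*,\psi^*}(x,y)$. Two-phase MLE algorithm: $\hat\phi\in\arg\max_{\phi\in\Phi}\sum_{i=1}^m\log p_\phi(x_i)$, then $\hat\psi\in\arg\max_{\psi\in\Psi}\sum_{j=1}^n\log p_{\hat\phi,\psi}(x_j,y_j)$. $d_{\mathrm{TV}}(P,Q)=\frac12\sum|p-q|$. *)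

theory Defs
  imports "HOL-Probability.Probability"
begin

definition joint_xy :: "(nat \<times> nat) pmf \<Rightarrow> (nat \<Rightarrow> nat pmf) \<Rightarrow> (nat \<times> nat) pmf" where
  "joint_xy \<phi> \<psi> = bind_pmf \<phi> (\<lambda>(x, z). map_pmf (\<lambda>y. (x, y)) (\<psi> z))"

definition marg_x :: "(nat \<times> nat) pmf \<Rightarrow> nat pmf" where
  "marg_x \<phi> = map_pmf fst \<phi>"

definition elog :: "real \<Rightarrow> ereal" where
  "elog p = (if p = 0 then - \<infinity> else ereal (ln p))"

fun iid_pmf :: "nat \<Rightarrow> 'a pmf \<Rightarrow> 'a list pmf" where
  "iid_pmf 0 p = return_pmf []"
| "iid_pmf (Suc k) p = bind_pmf p (\<lambda>x. map_pmf (Cons x) (iid_pmf k p))"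

definition is_argmax_on :: "('a \<Rightarrow> ereal) \<Rightarrow> 'a set \<Rightarrow> 'a \<Rightarrow> bool" where
  "is_argmax_on f S a \<longleftrightarrow> a \<in> S \<and> (\<forall>b\<in>S. f b \<le> f a)"

definition loglik1 :: "nat list \<Rightarrow> (nat \<times> nat) pmf \<Rightarrow> ereal" where
  "loglik1 xs \<phi> = (\<Sum>i<length xs. elog (pmf (marg_x \<phi>) (xs ! i)))"

definition loglik2 :: "(nat \<times> nat) list \<Rightarrow> (nat \<times> nat) pmf \<Rightarrow> (nat \<Rightarrow> nat pmf) \<Rightarrow> ereal" where
  "loglik2 ps \<phi> \<psi> = (\<Sum>j<length ps. elog (pmf (joint_xy \<phi> \<psi>) (ps ! j)))"

definition mle1 :: "(nat \<times> nat) pmf set \<Rightarrow> nat list \<Rightarrow> (nat \<times> nat) pmf set" where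
  "mle1 \<Phi> xs = {\<phi>. is_argmax_on (loglik1 xs) \<Phi> \<phi>}"

definition mle2 :: "(nat \<Rightarrow> nat pmf) set \<Rightarrow> (nat \<times> nat) list \<Rightarrow> (nat \<times> nat) pmf \<Rightarrow> (nat \<Rightarrow> nat pmf) set" where
  "mle2 \<Psi> ps \<phi> = {\<psi>. is_argmax_on (loglik2 ps \<phi>) \<Psi> \<psi>}"

text \<open>All possible outputs of the two-phase MLE algorithm (any tie-breaking).\<close>
definition two_phase_outputs ::
  "(nat \<times> nat) pmf set \<Rightarrow> (nat \<Rightarrow> nat pmf) set \<Rightarrow> nat list \<Rightarrow> (nat \<times> nat) list
     \<Rightarrow> ((nat \<times> nat) pmf \<times> (nat \<Rightarrow> nat pmf)) set" where
  "two_phase_outputs \<Phi> \<Psi> xs ps = {(\<phi>, \<psi>). \<phi> \<in> mle1 \<Phi> xs \<and> \<psi> \<in> mle2 \<Psi> ps \<phi>}"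

definition two_phase_defined ::
  "(nat \<times> nat) pmf set \<Rightarrow> (nat \<Rightarrow> nat pmf) set \<Rightarrow> nat list \<Rightarrow> (nat \<times> nat) list \<Rightarrow> bool" where
  "two_phase_defined \<Phi> \<Psi> xs ps \<longleftrightarrow> mle1 \<Phi> xs \<noteq> {} \<and> (\<forall>\<phi>\<in>mle1 \<Phi> xs. mle2 \<Psi> ps \<phi> \<noteq> {})"

definition d_TV :: "'a pmf \<Rightarrow> 'a pmf \<Rightarrow> real" where
  "d_TV P Q = (1/2) * (\<Sum>\<^sub>\<infinity>a. \<bar>pmf P a - pmf Q a\<bar>)"

end

theory Submission
  imports Defs
begin

lemma ln_strict: fixes x :: real assumes "0 < x" "x \<noteq> 1" shows "ln x < x - 1"
proof -
  have s: "0 < sqrt x" "sqrt x \<noteq> 1" using assms by auto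
  have "ln x = 2 * ln (sqrt x)" using assms by (simp add: ln_sqrt)
  also have "\<dots> \<le> 2 * (sqrt x - 1)" using ln_le_minus_one[OF s(1)] by simp
  also have "\<dots> < x - 1"
  proof -
    have "0 < (sqrt x - 1)^2" using s by simp
    also have "(sqrt x - 1)^2 = x - 2 * sqrt x + 1" using assms by (simp add: power2_eq_square algebra_simps)
    finally show ?thesis by simp
  qed
  finally show ?thesis .
qed

lemma gibbs2:
  fixes a b q :: real
  assumes a: "a > 0" and b: "b > 0" and q: "0 < q" "q < 1"
  shows "a * ln q + b * ln (1 - q) \<le> a * ln (a/(a+b)) + b * ln (b/(a+b))"
    and "q \<noteq> a/(a+b) \<Longrightarrow> a * ln q + b * ln (1 - q) < a * ln (a/(a+b)) + b * ln (b/(a+b))"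
proof -
  define m where "m = a + b"
  have m: "m > 0" using a b m_def by simp
  have x1: "q*m/a > 0" and x2: "(1-q)*m/b > 0" using a b q m by auto
  have e1: "a * ln q - a * ln (a/m) = a * ln (q*m/a)"
  proof -
    have "ln (q*m/a) = ln q + ln m - ln a" using a q m by (simp add: ln_div ln_mult)
    moreover have "ln (a/m) = ln a - ln m" using a m by (simp add: ln_div)
    ultimately have "ln q - ln (a/m) = ln (q*m/a)" by linarith
    thus ?thesis by (metis right_diff_distrib)
  qed
  have e2: "b * ln (1-q) - b * ln (b/m) = b * ln ((1-q)*m/b)"
  proof -
    have "ln ((1-q)*m/b) = ln (1-q) + ln m - ln b" using b q m by (simp add: ln_div ln_mult)
    moreover have "ln (b/m) = ln b - ln m" using b m by (simp add: ln_div)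
    ultimately have "ln (1-q) - ln (b/m) = ln ((1-q)*m/b)" by linarith
    thus ?thesis by (metis right_diff_distrib)
  qed
  have i1: "a * ln (q*m/a) \<le> a * (q*m/a - 1)" using ln_le_minus_one[OF x1] a by (simp add: mult_left_mono)
  have i2: "b * ln ((1-q)*m/b) \<le> b * ((1-q)*m/b - 1)" using ln_le_minus_one[OF x2] b by (simp add: mult_left_mono)
  have s: "a * (q*m/a - 1) + b * ((1-q)*m/b - 1) = 0" using a b m_def by (simp add: field_simps)
  show "a * ln q + b * ln (1 - q) \<le> a * ln (a/(a+b)) + b * ln (b/(a+b))"
    using e1 e2 i1 i2 s unfolding m_def[symmetric] by linarith
  assume ne: "q \<noteq> a/(a+b)"
  have "q*m/a \<noteq> 1" using ne a b m_def by (auto simp: field_simps)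
  hence i1': "a * ln (q*m/a) < a * (q*m/a - 1)" using ln_strict[OF x1] a by simp
  show "a * ln q + b * ln (1 - q) < a * ln (a/(a+b)) + b * ln (b/(a+b))"
    using e1 e2 i1' i2 s unfolding m_def[symmetric] by linarith
qed

definition Mq :: "real \<Rightarrow> nat pmf" where
  "Mq q = map_pmf (\<lambda>b. if b then 1 else 2) (bernoulli_pmf q)"

definition Bq :: "real \<Rightarrow> nat \<Rightarrow> (nat \<times> nat) pmf" where
  "Bq q z = map_pmf (\<lambda>b. (if b then 1 else 2, z)) (bernoulli_pmf q)"

definition psi0 :: "nat \<Rightarrow> nat pmf" where
  "psi0 z = return_pmf (max 1 z)"

lemma marg_Bq: "marg_x (Bq q z) = Mq q"
  by (simp add: marg_x_def Bq_def Mq_def map_pmf_comp o_def)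

lemma inj_12: "inj (\<lambda>b::bool. if b then (1::nat) else 2)"
  by (auto simp: inj_def split: if_splits)

lemma inj_12z: "inj (\<lambda>b::bool. (if b then (1::nat) else 2, z::nat))"
  by (auto simp: inj_def split: if_splits)

lemma pmf_Mq1: "0 \<le> q \<Longrightarrow> q \<le> 1 \<Longrightarrow> pmf (Mq q) 1 = q"
  using pmf_map_inj'[OF inj_12, of "bernoulli_pmf q" True] by (simp add: Mq_def)

lemma pmf_Mq2: "0 \<le> q \<Longrightarrow> q \<le> 1 \<Longrightarrow> pmf (Mq q) 2 = 1 - q"
  using pmf_map_inj'[OF inj_12, of "bernoulli_pmf q" False] by (simp add: Mq_def)

lemma pmf_Mq1': "0 \<le> q \<Longrightarrow> q \<le> 1 \<Longrightarrow> pmf (Mq q) (Suc 0) = q"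
  using pmf_Mq1 by simp

lemma set_Mq: "set_pmf (Mq q) \<subseteq> {1,2}"
  by (auto simp: Mq_def)

lemma set_Bq: "set_pmf (Bq q z) \<subseteq> {(1,z),(2,z)}"
  by (auto simp: Bq_def)

lemma joint_Bq: "joint_xy (Bq q z) psi0 = Bq q (max 1 z)"
  by (simp add: joint_xy_def Bq_def psi0_def bind_map_pmf map_pmf_def[symmetric] o_def)

lemma iid_support: "xs \<in> set_pmf (iid_pmf k p) \<Longrightarrow> length xs = k \<and> set xs \<subseteq> set_pmf p"
  by (induction k arbitrary: xs) fastforce+

lemma ereal_suc_mult: "ereal (real (Suc a)) * e = e + ereal (real a) * e"
  by (cases e) (auto simp: algebra_simps)

lemma ereal_suc_mult': "ereal (1 + real a) * e = e + ereal (real a) * e"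
  using ereal_suc_mult[of a e] by simp

lemma ereal0_mult: "ereal 0 * e = 0"
  by (cases e) (simp_all add: zero_ereal_def)

lemma count_sum:
  fixes g :: "nat \<Rightarrow> ereal"
  assumes "set xs \<subseteq> {1,2}"
  shows "sum_list (map g xs) = ereal (real (count_list xs 1)) * g 1 + ereal (real (count_list xs 2)) * g 2"
  using assms
proof (induction xs)
  case Nil then show ?case by (simp add: ereal0_mult)
next
  case (Cons x xs)
  then show ?case by (auto simp: ereal_suc_mult ereal_suc_mult' add_ac)
qed

lemma count_len: "set xs \<subseteq> {1::nat,2} \<Longrightarrow> count_list xs 1 + count_list xs 2 = length xs"
  by (induction xs) auto

lemma loglik_Bq:
  assumes "set xs \<subseteq> {1,2}" "0 \<le> q" "q \<le> 1"
  shows "loglik1 xs (Bq q z) = ereal (real (count_list xs 1)) * elog q + ereal (real (count_list xs 2)) * elog (1 - q)"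
proof -
  have "loglik1 xs (Bq q z) = sum_list (map (\<lambda>x. elog (pmf (Mq q) x)) xs)"
    by (simp add: loglik1_def marg_Bq sum_list_sum_nth atLeast0LessThan)
  also have "\<dots> = ereal (real (count_list xs 1)) * elog (pmf (Mq q) 1) + ereal (real (count_list xs 2)) * elog (pmf (Mq q) 2)"
    by (rule count_sum[OF assms(1)])
  finally show ?thesis using assms by (simp add: pmf_Mq1 pmf_Mq1' pmf_Mq2)
qed


definition LL :: "nat \<Rightarrow> nat \<Rightarrow> real \<Rightarrow> ereal" where
  "LL A B q = ereal (real A) * elog q + ereal (real B) * elog (1 - q)"

lemma elog_le0: "0 \<le> p \<Longrightarrow> p \<le> 1 \<Longrightarrow> elog p \<le> 0"
  by (auto simp: elog_def)

lemma elog_pos: "0 < p \<Longrightarrow> elog p = ereal (ln p)"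
  by (simp add: elog_def)

lemma nat_mult_nonpos: "e \<le> 0 \<Longrightarrow> ereal (real k) * e \<le> 0"
  by (cases e) (auto simp: mult_nonneg_nonpos)

lemma key_ll:
  assumes AB: "A + B = m" and odd: "odd m"
  shows "0 \<le> q \<Longrightarrow> q \<le> 1 \<Longrightarrow> LL A B q \<le> LL A B (real A / real m)"
    and "LL A B (1/2) < LL A B (real A / real m)"
proof -
  have m0: "m > 0" using odd by (cases m) auto
  have hl: "ln (1/2::real) < 0" by simp
  consider "A = 0" | "B = 0" | "A > 0 \<and> B > 0" by auto
  then have "(\<forall>q. 0 \<le> q \<longrightarrow> q \<le> 1 \<longrightarrow> LL A B q \<le> LL A B (real A / real m)) \<and> LL A B (1/2) < LL A B (real A / real m)"
  proof cases
    case 1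
    hence Bm: "B = m" using AB by simp
    have top: "LL A B (real A / real m) = 0"
      using 1 by (simp add: LL_def ereal0_mult elog_def zero_ereal_def)
    have "\<forall>q. 0 \<le> q \<longrightarrow> q \<le> 1 \<longrightarrow> LL A B q \<le> 0"
      using 1 by (auto simp: LL_def ereal0_mult intro!: nat_mult_nonpos elog_le0)
    moreover have "LL A B (1/2) < 0"
    proof -
      have "LL A B (1/2) = ereal (real m * ln (1/2))"
        using 1 Bm by (simp add: LL_def ereal0_mult elog_def)
      moreover have "real m * ln (1/2) < 0" using m0 hl by (simp add: mult_pos_neg)
      ultimately show ?thesis by (simp add: zero_ereal_def)
    qed
    ultimately show ?thesis using top by simp
  next
    case 2
    hence Am: "A = m" using AB by simp
    have top: "LL A B (real A / real m) = 0"
      using 2 Am m0 by (simp add: LL_def ereal0_mult elog_def zero_ereal_def)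
    have "\<forall>q. 0 \<le> q \<longrightarrow> q \<le> 1 \<longrightarrow> LL A B q \<le> 0"
      using 2 by (auto simp: LL_def ereal0_mult intro!: nat_mult_nonpos elog_le0)
    moreover have "LL A B (1/2) < 0"
    proof -
      have "LL A B (1/2) = ereal (real m * ln (1/2))"
        using 2 Am by (simp add: LL_def ereal0_mult elog_def)
      moreover have "real m * ln (1/2) < 0" using m0 hl by (simp add: mult_pos_neg)
      ultimately show ?thesis by (simp add: zero_ereal_def)
    qed
    ultimately show ?thesis using top by simp
  next
    case 3
    define a where "a = real A"
    define b where "b = real B"
    have a: "a > 0" and b: "b > 0" using 3 a_def b_def by auto
    have mab: "real m = a + b" using AB a_def b_def by simp
    have qh: "real A / real m = a / (a+b)" using mab a_def by simp
    have qh1: "1 - a/(a+b) = b/(a+b)" using a b by (simp add: field_simps)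
    have top: "LL A B (real A / real m) = ereal (a * ln (a/(a+b)) + b * ln (b/(a+b)))"
    proof -
      have p1: "a/(a+b) > 0" "b/(a+b) > 0" using a b by auto
      have "LL A B (a/(a+b)) = ereal (a * ln (a/(a+b)) + b * ln (b/(a+b)))"
        unfolding LL_def qh1 a_def[symmetric] b_def[symmetric]
        using p1 by (simp add: elog_pos)
      thus ?thesis using qh by simp
    qed
    have gen: "LL A B q = ereal (a * ln q + b * ln (1 - q))" if "0 < q" "q < 1" for q
      using that unfolding LL_def a_def b_def by (simp add: elog_pos)
    have "LL A B q \<le> LL A B (real A / real m)" if q: "0 \<le> q" "q \<le> 1" for q
    proof -
      consider "q = 0" | "q = 1" | "0 < q \<and> q < 1" using q by fastforce
      then show ?thesis
      proof cases
        case 1 then show ?thesis using 3 by (simp add: LL_def elog_def)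
      next
        case 2 then show ?thesis using 3 by (simp add: LL_def elog_def)
      next
        case q3: 3
        then show ?thesis unfolding top gen[OF conjunct1[OF q3] conjunct2[OF q3]]
          using gibbs2(1)[OF a b] q3 by simp
      qed
    qed
    moreover have "LL A B (1/2) < LL A B (real A / real m)"
    proof -
      have ne: "1/2 \<noteq> a/(a+b)"
      proof
        assume "1/2 = a/(a+b)"
        hence "a + b = 2 * a" using a b by (simp add: field_simps)
        hence "real m = real (2 * A)" using mab a_def by simp
        hence "m = 2 * A" by (simp only: of_nat_eq_iff)
        thus False using odd by simp
      qed
      show ?thesis unfolding top gen[of "1/2", simplified]
        using gibbs2(2)[OF a b _ _ ne] by simp
    qed
    ultimately show ?thesis by blast
  qed
  thus "0 \<le> q \<Longrightarrow> q \<le> 1 \<Longrightarrow> LL A B q \<le> LL A B (real A / real m)"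
    and "LL A B (1/2) < LL A B (real A / real m)" by auto
qed

lemma tv_Bq: "d_TV (Bq q 2) (Bq (1/2) 1) \<ge> 1/4"
proof -
  define f where "f = (\<lambda>a. \<bar>pmf (Bq q 2) a - pmf (Bq (1/2) 1) a\<bar>)"
  have p1: "pmf (Bq q 2) (1,1) = 0"
    using set_Bq[of q 2] by (auto simp: pmf_eq_0_set_pmf)
  have p2: "pmf (Bq (1/2) 1) (1,1) = 1/2"
    using pmf_map_inj'[OF inj_12z[of 1], of "bernoulli_pmf (1/2)" True] by (simp add: Bq_def)
  have bd: "sum f F \<le> 2" if "finite F" for F
  proof -
    have "sum f F \<le> sum (pmf (Bq q 2)) F + sum (pmf (Bq (1/2) 1)) F"
      unfolding f_def sum.distrib[symmetric] by (intro sum_mono) (smt (verit) pmf_nonneg)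
    also have "\<dots> = measure (measure_pmf (Bq q 2)) F + measure (measure_pmf (Bq (1/2) 1)) F"
      using that by (simp add: measure_measure_pmf_finite)
    also have "\<dots> \<le> 1 + 1" by (intro add_mono) simp_all
    finally show ?thesis by simp
  qed
  have sf: "f summable_on UNIV"
    proof (rule nonneg_bdd_above_summable_on)
    show "bdd_above (sum f ` {F. F \<subseteq> UNIV \<and> finite F})"
      unfolding bdd_above_def using bd by blast
  qed (simp add: f_def)
  have "infsum f {(1,1)} \<le> infsum f UNIV"
    by (rule infsum_mono_neutral) (use sf in \<open>auto simp: f_def\<close>)
  moreover have "infsum f {(1,1)} = 1/2" using p1 p2 by (simp add: f_def)
  ultimately have "infsum f UNIV \<ge> 1/2" by simp
  thus ?thesis unfolding d_TV_def f_def[symmetric] by simp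
qed

definition PhiS :: "(nat \<times> nat) pmf set" where
  "PhiS = insert (Bq (1/2) 1) ((\<lambda>q. Bq q 2) ` {0..1})"

lemma good_sample:
  assumes len: "length xs = m" and odd: "odd m" and sx: "set xs \<subseteq> {1,2}"
  shows "two_phase_defined PhiS {psi0} xs ps \<and>
    (\<forall>(\<phi>h, \<psi>h) \<in> two_phase_outputs PhiS {psi0} xs ps.
       d_TV (joint_xy \<phi>h \<psi>h) (joint_xy (Bq (1/2) 1) psi0) \<ge> 1/8)"
proof -
  define A where "A = count_list xs 1"
  define B where "B = count_list xs 2"
  have AB: "A + B = m" using count_len[OF sx] len A_def B_def by simp
  define qh where "qh = real A / real m"
  have m0: "m > 0" using odd by (cases m) auto
  have qh01: "0 \<le> qh" "qh \<le> 1" using AB m0 by (auto simp: qh_def)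
  have ll: "loglik1 xs (Bq q z) = LL A B q" if "0 \<le> q" "q \<le> 1" for q z
    using loglik_Bq[OF sx that] by (simp add: LL_def A_def B_def)
  have k1: "LL A B q \<le> LL A B qh" if "0 \<le> q" "q \<le> 1" for q
    using key_ll(1)[OF AB odd that] by (simp add: qh_def)
  have k2: "LL A B (1/2) < LL A B qh"
    using key_ll(2)[OF AB odd] by (simp add: qh_def)
  have inm: "Bq qh 2 \<in> mle1 PhiS xs"
    unfolding mle1_def is_argmax_on_def
  proof (intro CollectI conjI ballI)
    show "Bq qh 2 \<in> PhiS" using qh01 by (auto simp: PhiS_def)
    fix b assume "b \<in> PhiS"
    then consider "b = Bq (1/2) 1" | q where "b = Bq q 2" "0 \<le> q" "q \<le> 1"
      by (auto simp: PhiS_def)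
    then show "loglik1 xs b \<le> loglik1 xs (Bq qh 2)"
    proof cases
      case 1 then show ?thesis using ll[of "1/2" 1] ll[OF qh01, of 2] k2 by simp
    next
      case 2 then show ?thesis using ll[of q 2] ll[OF qh01, of 2] k1[of q] by simp
    qed
  qed
  have form: "\<exists>q. \<phi> = Bq q 2" if "\<phi> \<in> mle1 PhiS xs" for \<phi>
  proof -
    have phi: "\<phi> \<in> PhiS" and le: "loglik1 xs (Bq qh 2) \<le> loglik1 xs \<phi>"
      using that inm by (auto simp: mle1_def is_argmax_on_def)
    have "\<phi> \<noteq> Bq (1/2) 1"
    proof
      assume "\<phi> = Bq (1/2) 1"
      with le have "LL A B qh \<le> LL A B (1/2)" using ll[of "1/2" 1] ll[OF qh01, of 2] by simp
      with k2 show False by simp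
    qed
    with phi show ?thesis by (auto simp: PhiS_def)
  qed
  have m2: "psi0 \<in> mle2 {psi0} ps \<phi>" for \<phi>
    by (simp add: mle2_def is_argmax_on_def)
  have "two_phase_defined PhiS {psi0} xs ps"
    unfolding two_phase_defined_def using inm m2 by blast
  moreover have "d_TV (joint_xy \<phi>h \<psi>h) (joint_xy (Bq (1/2) 1) psi0) \<ge> 1/8"
    if "(\<phi>h, \<psi>h) \<in> two_phase_outputs PhiS {psi0} xs ps" for \<phi>h \<psi>h
  proof -
    have "\<phi>h \<in> mle1 PhiS xs" "\<psi>h = psi0"
      using that by (auto simp: two_phase_outputs_def mle2_def is_argmax_on_def)
    then obtain q where q: "\<phi>h = Bq q 2" "\<psi>h = psi0" using form by blast
    have "d_TV (joint_xy \<phi>h \<psi>h) (joint_xy (Bq (1/2) 1) psi0) = d_TV (Bq q 2) (Bq (1/2) 1)"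
    proof -
      have mx: "max (1::nat) 2 = 2" "max (1::nat) 1 = 1" by simp_all
      show ?thesis unfolding q joint_Bq mx by (rule refl)
    qed
    thus ?thesis using tv_Bq[of q] by simp
  qed
  ultimately show ?thesis by blast
qed

theorem mainTheorem18:
  shows "\<exists>(\<Phi> :: (nat \<times> nat) pmf set) (\<Psi> :: (nat \<Rightarrow> nat pmf) set) \<phi>s \<psi>s.
    \<phi>s \<in> \<Phi> \<and> \<psi>s \<in> \<Psi> \<and>
    (\<forall>\<phi>\<in>\<Phi>. set_pmf \<phi> \<subseteq> {0<..} \<times> {0<..}) \<and>
    (\<forall>\<psi>\<in>\<Psi>. \<forall>z. set_pmf (\<psi> z) \<subseteq> {0<..}) \<and>
    (\<forall>c::real. c > 0 \<longrightarrow>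
      (\<exists>m n::nat. real m \<ge> c \<and> real n \<ge> c \<and>
        measure_pmf.prob
          (pair_pmf (iid_pmf m (marg_x \<phi>s)) (iid_pmf n (joint_xy \<phi>s \<psi>s)))
          {(xs, ps). two_phase_defined \<Phi> \<Psi> xs ps \<and>
             (\<forall>(\<phi>h, \<psi>h) \<in> two_phase_outputs \<Phi> \<Psi> xs ps.
                d_TV (joint_xy \<phi>h \<psi>h) (joint_xy \<phi>s \<psi>s) \<ge> 1/8)}
        \<ge> (1/2) * (1 - exp (-1)) * exp (-1)))"
  proof -
  have sPhi: "\<forall>\<phi>\<in>PhiS. set_pmf \<phi> \<subseteq> {0<..} \<times> {0<..}"
    unfolding PhiS_def by (auto dest!: set_Bq[THEN subsetD])
  have sPsi: "\<forall>\<psi>\<in>{psi0}. \<forall>z. set_pmf (\<psi> z) \<subseteq> {0<..}"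
    by (simp add: psi0_def less_max_iff_disj)
  have bnd: "(1/2) * (1 - exp (-1)) * exp (-1) \<le> (1::real)"
  proof -
    have e: "0 < exp (-1::real)" "exp (-1::real) \<le> 1" by simp_all
    hence "(1 - exp (-1)) * exp (-1) \<le> (1::real)" by (intro mult_le_one) simp_all
    thus ?thesis by simp
  qed
  have "\<exists>m n::nat. real m \<ge> c \<and> real n \<ge> c \<and>
        measure_pmf.prob
          (pair_pmf (iid_pmf m (marg_x (Bq (1/2) 1))) (iid_pmf n (joint_xy (Bq (1/2) 1) psi0)))
          {(xs, ps). two_phase_defined PhiS {psi0} xs ps \<and>
             (\<forall>(\<phi>h, \<psi>h) \<in> two_phase_outputs PhiS {psi0} xs ps.
                d_TV (joint_xy \<phi>h \<psi>h) (joint_xy (Bq (1/2) 1) psi0) \<ge> 1/8)}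
        \<ge> (1/2) * (1 - exp (-1)) * exp (-1)" if "c > 0" for c
  proof (intro exI conjI)
    define n where "n = nat \<lceil>c\<rceil>"
    define m where "m = 2 * n + 1"
    have cn: "c \<le> real n" unfolding n_def by (simp add: real_nat_ceiling_ge)
    show "c \<le> real m" using cn by (simp add: m_def)
    show "c \<le> real n" by (rule cn)
    have odd: "odd m" by (simp add: m_def)
    have "measure_pmf.prob
          (pair_pmf (iid_pmf m (marg_x (Bq (1/2) 1))) (iid_pmf n (joint_xy (Bq (1/2) 1) psi0)))
          {(xs, ps). two_phase_defined PhiS {psi0} xs ps \<and>
             (\<forall>(\<phi>h, \<psi>h) \<in> two_phase_outputs PhiS {psi0} xs ps.
                d_TV (joint_xy \<phi>h \<psi>h) (joint_xy (Bq (1/2) 1) psi0) \<ge> 1/8)} = 1"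
    proof (subst measure_pmf.prob_eq_1, simp, rule AE_pmfI)
      fix y assume "y \<in> set_pmf (pair_pmf (iid_pmf m (marg_x (Bq (1/2) 1))) (iid_pmf n (joint_xy (Bq (1/2) 1) psi0)))"
      then obtain xs ps where y: "y = (xs, ps)" and xs: "xs \<in> set_pmf (iid_pmf m (Mq (1/2)))"
        by (auto simp: set_pair_pmf marg_Bq)
      have "length xs = m" "set xs \<subseteq> {1,2}"
        using iid_support[OF xs] set_Mq by auto
      from good_sample[OF this(1) odd this(2), of ps]
      show "y \<in> {(xs, ps). two_phase_defined PhiS {psi0} xs ps \<and>
             (\<forall>(\<phi>h, \<psi>h) \<in> two_phase_outputs PhiS {psi0} xs ps.
                d_TV (joint_xy \<phi>h \<psi>h) (joint_xy (Bq (1/2) 1) psi0) \<ge> 1/8)}"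
        using y by simp
    qed
    thus "measure_pmf.prob
          (pair_pmf (iid_pmf m (marg_x (Bq (1/2) 1))) (iid_pmf n (joint_xy (Bq (1/2) 1) psi0)))
          {(xs, ps). two_phase_defined PhiS {psi0} xs ps \<and>
             (\<forall>(\<phi>h, \<psi>h) \<in> two_phase_outputs PhiS {psi0} xs ps.
                d_TV (joint_xy \<phi>h \<psi>h) (joint_xy (Bq (1/2) 1) psi0) \<ge> 1/8)}
        \<ge> (1/2) * (1 - exp (-1)) * exp (-1)" using bnd by simp
  qed
  moreover have "Bq (1/2) 1 \<in> PhiS" by (simp add: PhiS_def)
  ultimately show ?thesis using sPhi sPsi
    by (intro exI[of _ PhiS] exI[of _ "{psi0}"] exI[of _ "Bq (1/2) 1"] exI[of _ psi0]) auto
qed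

end
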